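(* For $n\ge1$ let $$\mathrm{Luc}_n(x)=\sum_{m=0}^{\lfloor n/2\rfloor}q^{\binom{m}{2}}\begin{bmatrix} n-m\\ m\end{bmatrix}_q\frac{[n]_q}{[n-m]_q}x^{n-2m}.$$ Then for every $n\ge1$, $$\det\left(\begin{bmatrix} 2i\\ i-j\end{bmatrix}_q x^2+\begin{bmatrix} 2i+2\\ i+1-j\end{bmatrix}_q\right)_{i,j=0}^{n-1}=\mathrm{Luc}_{2n}(x),$$ $$x\det\left(\begin{bmatrix} 2i+1\\ i-j\end{bmatrix}_q x^2+\begin{bmatrix} 2i+3\\ i+1-j\end{bmatrix}_q\right)_{i,j=0}^{n-1}=\mathrm{Luc}_{2n+1}(x).$$
   Context: Here $q$ is an indeterminate, $[m]_q=\frac{1-q^m}{1-q}$, and for integers $m\ge0$ and $j$ the $q$-binomial coefficient is $\begin{bmatrix} m\\ j\end{bmatrix}_q=\frac{(1-q^m)(1-q^{m-1})\cdots(1-q^{m-j+1})}{(1-q)(1-q^2)\cdots(1-q^j)}$ for $0\le j\le m$ and $0$ otherwise. *)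

theory Defs
  imports Main "Jordan_Normal_Form.Determinant"
begin

definition qint :: "'a::field \<Rightarrow> nat \<Rightarrow> 'a" where
  "qint q m = (1 - q ^ m) / (1 - q)"

definition qbinom :: "'a::field \<Rightarrow> nat \<Rightarrow> int \<Rightarrow> 'a" where
  "qbinom q m j = (if 0 \<le> j \<and> j \<le> int m then
     (\<Prod>k<nat j. (1 - q ^ (m - k))) / (\<Prod>k=1..nat j. (1 - q ^ k))
   else 0)"

definition Luc :: "'a::field \<Rightarrow> nat \<Rightarrow> 'a \<Rightarrow> 'a" where
  "Luc q n x = (\<Sum>m=0..n div 2. q ^ (m choose 2) * qbinom q (n - m) (int m)
      * (qint q n / qint q (n - m)) * x ^ (n - 2 * m))"

end

theory Submission
  imports Defs
begin


lemma hess_det: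
  fixes M :: "'a::comm_ring_1 mat" and v :: "nat \<Rightarrow> 'a"
  assumes M: "M \<in> carrier_mat n n" and n: "n \<ge> 1"
    and up: "\<And>i j. i < n \<Longrightarrow> j < n \<Longrightarrow> j > Suc i \<Longrightarrow> M $$ (i,j) = 0"
    and sup: "\<And>i. Suc i < n \<Longrightarrow> M $$ (i, Suc i) = 1"
    and v0: "v 0 = 1"
    and rows: "\<And>i. Suc i < n \<Longrightarrow> (\<Sum>j<n. M $$ (i,j) * v j) = 0"
  shows "det M = (-1)^(n-1) * (\<Sum>j<n. M $$ (n-1,j) * v j)"
proof -
  define U where "U = mat n n (\<lambda>(i,j). if j = 0 then v i else if i = j then 1 else 0)"
  have U: "U \<in> carrier_mat n n" unfolding U_def by auto
  have dU: "det U = 1"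
  proof -
    have "det U = prod_list (diag_mat U)"
      by (rule det_lower_triangular[OF _ U]) (auto simp: U_def)
    also have "\<dots> = 1" unfolding prod_list_diag_prod using v0
      by (auto simp: U_def intro!: prod.neutral)
    finally show ?thesis .
  qed
  define P where "P = M * U"
  have P: "P \<in> carrier_mat n n" using M U unfolding P_def by auto
  have dP: "det P = det M" unfolding P_def using det_mult[OF M U] dU by simp
  have P0: "P $$ (i,0) = (\<Sum>j<n. M $$ (i,j) * v j)" if "i < n" for i
    using that M n unfolding P_def U_def
    by (auto simp: scalar_prod_def col_def row_def atLeast0LessThan intro!: sum.cong)
  have Pj: "P $$ (i,j) = M $$ (i,j)" if "i < n" "j < n" "j > 0" for i j
  proof -
    have "P $$ (i,j) = (\<Sum>k\<in>{0..<n}. M $$ (i,k) * (if k = j then 1 else 0))"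
      using that M unfolding P_def U_def
      by (auto simp: scalar_prod_def col_def row_def intro!: sum.cong)
    also have "\<dots> = (\<Sum>k\<in>{0..<n}. if k = j then M $$ (i,k) else 0)" by (rule sum.cong) auto
    also have "\<dots> = M $$ (i,j)" using that by simp
    finally show ?thesis .
  qed
  have "det P = (\<Sum>i<n. P $$ (i,0) * cofactor P i 0)"
    by (rule laplace_expansion_column[OF P]) (use n in auto)
  also have "\<dots> = (\<Sum>i\<in>{n-1}. P $$ (i,0) * cofactor P i 0)"
  proof (rule sum.mono_neutral_right)
    show "finite {..<n}" by simp
    show "{n-1} \<subseteq> {..<n}" using n by auto
    show "\<forall>i\<in>{..<n} - {n-1}. P $$ (i,0) * cofactor P i 0 = 0"
    proof
      fix i assume "i \<in> {..<n} - {n-1}"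
      then have "i < n" "Suc i < n" by auto
      then show "P $$ (i,0) * cofactor P i 0 = 0" using P0 rows by simp
    qed
  qed
  also have "\<dots> = P $$ (n-1,0) * cofactor P (n-1) 0" by simp
  also have "cofactor P (n-1) 0 = (-1)^(n-1)"
  proof -
    have "det (mat_delete P (n-1) 0) = prod_list (diag_mat (mat_delete P (n-1) 0))"
      by (rule det_lower_triangular[of "n-1"])
         (use P in \<open>auto simp: mat_delete_def Pj up\<close>)
    also have "\<dots> = 1" unfolding prod_list_diag_prod using P
      by (auto simp: mat_delete_def Pj sup intro!: prod.neutral)
    finally show ?thesis unfolding cofactor_def by simp
  qed
  finally show ?thesis using dP P0[of "n-1"] n by (simp add: mult.commute)
qed



definition qf :: "'a::field \<Rightarrow> nat \<Rightarrow> 'a" where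
  "qf q n = (\<Prod>k=1..n. (1 - q ^ k))"

lemma qf_0[simp]: "qf q 0 = 1" by (simp add: qf_def)
lemma qf_Suc: "qf q (Suc n) = qf q n * (1 - q ^ Suc n)"
  by (simp add: qf_def prod.nat_ivl_Suc')

locale gen =
  fixes q :: "'a::field"
  assumes gen: "\<And>k::nat. k \<ge> 1 \<Longrightarrow> q ^ k \<noteq> 1"
begin

lemma nz: "k \<ge> 1 \<Longrightarrow> 1 - q ^ k \<noteq> 0" using gen[of k] by auto
lemma nzS[simp]: "1 - q ^ Suc k \<noteq> 0" using nz[of "Suc k"] by auto
lemma nz1[simp]: "1 - q \<noteq> 0" using nz[of 1] by auto
lemma qf_nz[simp]: "qf q n \<noteq> 0"
proof (induct n)
  case (Suc n) then show ?case using nz[of "Suc n"] by (simp only: qf_Suc) simp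
qed simp

lemma qint_nz: "m \<ge> 1 \<Longrightarrow> qint q m \<noteq> 0"
  using nz[of m] nz1 by (simp add: qint_def)

lemma prod_top: "j \<le> m \<Longrightarrow> (\<Prod>k<j. (1 - q ^ (m - k))) * qf q (m - j) = qf q m"
proof (induct j)
  case 0 then show ?case by simp
next
  case (Suc j)
  then have "m - j = Suc (m - Suc j)" by simp
  then have "qf q (m - j) = qf q (m - Suc j) * (1 - q ^ (m - j))" by (simp add: qf_Suc del: power_Suc)
  then show ?case using Suc by (simp add: mult.assoc mult.commute mult.left_commute)
qed

lemma qbinom_qf: "j \<le> m \<Longrightarrow> qbinom q m (int j) = qf q m / (qf q j * qf q (m - j))"
proof -
  assume jm: "j \<le> m"
  have "(\<Prod>k<j. (1 - q ^ (m - k))) = qf q m / qf q (m - j)"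
    using prod_top[OF jm] by (simp add: eq_divide_eq)
  moreover have "(\<Prod>k=1..j. (1 - q ^ k)) = qf q j" by (simp add: qf_def)
  ultimately show ?thesis using jm by (simp add: qbinom_def)
qed

definition Fk :: "nat \<Rightarrow> nat \<Rightarrow> nat \<Rightarrow> 'a" where
  "Fk s r k = (-1)^k * q^((s-k) choose 2) * qf q (2*s+r) * qf q (s+r-k-1) * (1 - q^(2*s+r-2*k))
     / (qf q k * qf q (2*s+r-k) * qf q (s-k) * qf q r)"
definition Sk :: "nat \<Rightarrow> nat \<Rightarrow> nat \<Rightarrow> 'a" where
  "Sk s r k = (-1)^k * q^((s-k) choose 2) * qf q (2*s+r) * qf q (s+r-k-1)
     / ((1 - q^s) * qf q k * qf q (2*s+r-1-k) * qf q (s-k-1) * qf q r)"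

lemma step: assumes "Suc k < s" shows "Sk s r (Suc k) = Sk s r k + Fk s r (Suc k)"
proof -
  obtain t where s: "s = k + t + 2" using assms by (metis add.commute add_Suc_right add_2_eq_Suc' less_imp_Suc_add)
  have e1: "s - Suc k = Suc t" "s + r - Suc k - 1 = t + r" "2*s+r - Suc k = Suc (k+2*t+2+r)"
     "2*s+r-1-Suc k = k+2*t+2+r" "s - Suc k - 1 = t" "s - k = Suc (Suc t)" "s+r-k-1 = Suc (t+r)"
     "2*s+r-1-k = Suc (k+2*t+2+r)" "s-k-1 = Suc t" "2*s+r-2*Suc k = 2*t+2+r"
    using s by auto
  have c: "(Suc (Suc t) choose 2) = (Suc t choose 2) + Suc t"
    by (simp add: numeral_2_eq_2)
  define a where "a = q ^ Suc k"
  define b where "b = q ^ Suc t"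
  define c where "c = q ^ Suc (t+r)"
  have pa: "q ^ Suc (k + 2 * t + 2 + r) = a*b*c" "q^s = a*b" "q ^ (2*t+2+r) = b*c"
  proof -
    have "Suc (k + 2 * t + 2 + r) = Suc k + Suc t + Suc (t+r)" "s = Suc k + Suc t" "2*t+2+r = Suc t + Suc (t+r)"
      using s by auto
    then show "q ^ Suc (k + 2 * t + 2 + r) = a*b*c" "q^s = a*b" "q ^ (2*t+2+r) = b*c"
      unfolding a_def b_def c_def by (simp_all only: power_add)
  qed
  have nzs: "1 - a \<noteq> 0" "1 - b \<noteq> 0" "1 - a*b \<noteq> 0" "1 - a*b*c \<noteq> 0"
  proof -
    show "1 - a \<noteq> 0" "1 - b \<noteq> 0" unfolding a_def b_def by (rule nzS)+
    show "1 - a*b \<noteq> 0" unfolding pa(2)[symmetric] by (rule nz) (simp add: s)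
    show "1 - a*b*c \<noteq> 0" unfolding pa(1)[symmetric] by (rule nzS)
  qed
  define da where "da = 1 - a"
  define db where "db = 1 - b"
  define dc where "dc = 1 - c"
  define dab where "dab = 1 - a*b"
  define dbc where "dbc = 1 - b*c"
  define dabc where "dabc = 1 - a*b*c"
  have nzd: "da \<noteq> 0" "db \<noteq> 0" "dab \<noteq> 0" "dabc \<noteq> 0"
    using nzs unfolding da_def db_def dab_def dabc_def by auto
  define C where "C = (-1)^(Suc k) * q^(Suc t choose 2) * qf q (2*s+r) * qf q (t+r)
     / (qf q k * qf q (k+2*t+2+r) * qf q t * qf q r * da * dabc * db * dab)"
  have h1: "q^(Suc (Suc t) choose 2) = q^(Suc t choose 2) * b"
    unfolding c b_def by (simp only: power_add)
  have h2: "qf q (Suc (t+r)) = qf q (t+r) * dc" unfolding dc_def c_def by (rule qf_Suc)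
  have h3: "qf q (Suc (k+2*t+2+r)) = qf q (k+2*t+2+r) * dabc" unfolding dabc_def pa(1)[symmetric] by (rule qf_Suc)
  have h4: "qf q (Suc t) = qf q t * db" unfolding db_def b_def by (rule qf_Suc)
  have h5: "1 - q^s = dab" unfolding dab_def pa(2) ..
  have h6: "qf q (Suc k) = qf q k * da" unfolding da_def a_def by (rule qf_Suc)
  have h7: "1 - q ^ (2*t+2+r) = dbc" unfolding dbc_def pa(3) ..
  have "Sk s r (Suc k) = C * (dabc*db)"
    unfolding Sk_def e1 C_def h5 h6 using nzd by (simp add: field_simps h4)
  moreover have "Sk s r k = C * (-b*dc*da)"
    unfolding Sk_def e1 C_def h1 h2 h3 h4 h5 using nzd by (simp add: field_simps h4)
  moreover have "Fk s r (Suc k) = C * (dab*dbc)"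
    unfolding Fk_def e1 C_def h3 h4 h6 h7 using nzd by (simp add: field_simps h4)
  moreover have "dabc*db = -b*dc*da + dab*dbc"
    unfolding da_def db_def dc_def dab_def dbc_def dabc_def by (simp add: algebra_simps)
  ultimately show ?thesis by (simp add: algebra_simps)
qed

end


context gen begin
lemma frac_aux: "(d1::'b::field) \<noteq> 0 \<Longrightarrow> d2 \<noteq> 0 \<Longrightarrow> B\<noteq>0 \<Longrightarrow> U\<noteq>0 \<Longrightarrow> R\<noteq>0 \<Longrightarrow>
   N/(d2*B*U*R) = N*d1/((B*d1)*(U*d2)*R)" by (simp add: field_simps)

lemma base: assumes "s \<ge> 1" shows "Sk s r 0 = Fk s r 0"
proof -
  obtain u where s: "s = Suc u" using assms by (cases s) auto
  have e: "s+r-1 = u+r" "2*s+r-1 = Suc (2*u+r)" "s-1 = u" "2*s+r-2*0 = 2*s+r" by (auto simp: s)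
  have h: "qf q (Suc (Suc (2*u+r))) = qf q (Suc (2*u+r)) * (1 - q^(2*s+r))"
    by (simp only: qf_Suc) (simp add: s)
  have h2: "qf q s = qf q u * (1 - q^s)" unfolding s by (rule qf_Suc)
  have nz2: "1 - q^(2*s+r) \<noteq> 0" "1 - q^s \<noteq> 0" using nz assms by auto
  have "Sk s r 0 = q^(s choose 2) * qf q (2*s+r) * qf q (u+r) / ((1 - q^s) * qf q (Suc (2*u+r)) * qf q u * qf q r)"
    unfolding Sk_def by (simp only: diff_zero e) simp
  also have "\<dots> = q^(s choose 2) * qf q (2*s+r) * qf q (u+r) * (1 - q^(2*s+r)) / (qf q (Suc (Suc (2*u+r))) * qf q s * qf q r)"
    unfolding h h2 by (rule frac_aux) (use nz2 in auto)
  also have "\<dots> = Fk s r 0" unfolding Fk_def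
    by (simp only: diff_zero e) (simp add: s)
  finally show ?thesis .
qed

lemma final: assumes "s \<ge> 1" shows "Sk s r (s-1) + (-1)^s * qbinom q (2*s+r) (int s) = 0"
proof -
  obtain u where s: "s = Suc u" using assms by (cases s) auto
  have e: "s - (s-1) = 1" "s+r-(s-1)-1 = r" "2*s+r-1-(s-1) = s+r" "s-(s-1)-1 = 0" "2*s+r-s = s+r"
    using assms by auto
  have h2: "qf q s = qf q (s-1) * (1 - q^s)" unfolding s by (simp only: qf_Suc) simp
  have nz2: "1 - q^s \<noteq> 0" using nz assms by auto
  have m1: "(-1::'a)^(s-1) = - ((-1)^s)" unfolding s by simp
  have "Sk s r (s-1) = (-1)^(s-1) * qf q (2*s+r) / ((1 - q^s) * qf q (s-1) * qf q (s+r))"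
    unfolding Sk_def e by (simp add: binomial_eq_0)
  also have "\<dots> = - ((-1)^s * qbinom q (2*s+r) (int s))"
    using nz2 apply (subst qbinom_qf) apply simp unfolding e h2 m1 by (simp add: field_simps)
  finally show ?thesis by simp
qed

definition cc :: "nat \<Rightarrow> nat \<Rightarrow> 'a" where
  "cc j m = (if j = 0 then (if m = 0 then 1 else 0)
      else q^(m choose 2) * qbinom q (j-m) (int m) * (qint q j / qint q (j-m)))"

lemma cc_0: "cc j 0 = 1"
  unfolding cc_def using qint_nz[of j] by (auto simp: qbinom_def binomial_eq_0)

lemma term_eq: assumes "k < s" shows "(-1)^k * qbinom q (2*s+r) (int k) * cc (2*s+r-2*k) (s-k) = Fk s r k"
proof -
  obtain t where "s = Suc (k + t)" using assms less_imp_Suc_add by blast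
  then have s: "s = k + Suc t" by simp
  have e: "2*s+r-2*k = Suc (Suc (2*t+r))" "s - k = Suc t" 
    "s+r-k-1 = t+r" "2*s+r-k = k + Suc (Suc (2*t+r))"
    by (auto simp: s)
  have e2: "Suc (Suc (2*t+r)) - Suc t = Suc (t+r)" "Suc (t + r) - Suc t = r" by auto
  have h: "qf q (Suc (t+r)) = qf q (t+r) * (1 - q^Suc (t+r))" by (rule qf_Suc)
  have nz3: "1 - q^Suc (t+r) \<noteq> 0" by (rule nzS)
  have c1: "cc (Suc (Suc (2*t+r))) (Suc t) = q^(Suc t choose 2) * (qf q (Suc (t+r)) / (qf q (Suc t) * qf q r)) *
        ((1 - q^(Suc (Suc (2*t+r))))/(1 - q^Suc (t+r)))"
  proof -
    have "cc (Suc (Suc (2*t+r))) (Suc t) = q^(Suc t choose 2) * qbinom q (Suc (t+r)) (int (Suc t))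
       * (qint q (Suc (Suc (2*t+r))) / qint q (Suc (t+r)))"
      unfolding cc_def e2 by (simp only: nat.distinct(2) if_False)
    also have "qbinom q (Suc (t+r)) (int (Suc t)) = qf q (Suc (t+r)) / (qf q (Suc t) * qf q r)"
      by (subst qbinom_qf) (simp, simp only: e2)
    also have "qint q (Suc (Suc (2*t+r))) / qint q (Suc (t+r)) = (1 - q^(Suc (Suc (2*t+r))))/(1 - q^Suc (t+r))"
      unfolding qint_def using nz1 by (simp del: power_Suc)
    finally show ?thesis .
  qed
  have c2: "qbinom q (2*s+r) (int k) = qf q (2*s+r) / (qf q k * qf q (2*s+r-k))"
    by (rule qbinom_qf) (simp add: s)
  have "(-1)^k * qbinom q (2*s+r) (int k) * cc (2*s+r-2*k) (s-k) =
     (-1)^k * (qf q (2*s+r) / (qf q k * qf q (k + Suc (Suc (2*t+r))))) *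
      (q^(Suc t choose 2) * (qf q (t+r) * (1 - q^Suc (t+r)) / (qf q (Suc t) * qf q r)) *
        ((1 - q^(Suc (Suc (2*t+r))))/(1 - q^Suc (t+r))))"
    unfolding c2 e(1,2,4) c1 h ..
  also have "\<dots> = Fk s r k" unfolding Fk_def e using nz3
    by (simp add: field_simps del: power_Suc)
  finally show ?thesis .
qed

end


context gen begin

lemma partial: "j < s \<Longrightarrow> (\<Sum>k\<le>j. Fk s r k) = Sk s r j"
proof (induct j)
  case 0 then show ?case using base[of s r] by simp
next
  case (Suc j) then show ?case using step[of j s r] by simp
qed

lemma qbinom_0: "qbinom q n 0 = 1"
  using qbinom_qf[of 0 n] by simp

lemma inner: assumes "2*s \<le> n"
  shows "(\<Sum>k\<le>s. (-1)^k * qbinom q n (int k) * cc (n-2*k) (s-k)) = (if s = 0 then 1 else 0)"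
proof (cases "s = 0")
  case True then show ?thesis by (simp add: qbinom_0 cc_0)
next
  case False
  then have s1: "s \<ge> 1" by simp
  obtain r where n: "n = 2*s + r" using assms le_Suc_ex by blast
  obtain u where su: "s = Suc u" using False by (cases s) auto
  have "(\<Sum>k\<le>s. (-1)^k * qbinom q n (int k) * cc (n-2*k) (s-k))
     = (\<Sum>k\<le>u. (-1)^k * qbinom q n (int k) * cc (n-2*k) (s-k)) + (-1)^s * qbinom q n (int s) * cc (n-2*s) (s-s)"
    unfolding su by simp
  also have "(\<Sum>k\<le>u. (-1)^k * qbinom q n (int k) * cc (n-2*k) (s-k)) = (\<Sum>k\<le>u. Fk s r k)"
  proof (rule sum.cong)
    fix k assume "k \<in> {..u}"
    then have "k < s" by (simp add: su)
    then show "(-1)^k * qbinom q n (int k) * cc (n-2*k) (s-k) = Fk s r k"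
      unfolding n by (rule term_eq)
  qed simp
  also have "\<dots> = Sk s r u" by (rule partial) (simp add: su)
  also have "cc (n-2*s) (s-s) = 1" by (simp add: cc_0)
  finally show ?thesis using final[OF s1, of r] False by (simp add: n su)
qed

definition E :: "nat \<Rightarrow> 'a \<Rightarrow> 'a" where
  "E j y = (\<Sum>m\<le>j div 2. cc j m * y^(j div 2 - m))"

lemma inversion: "y^(n div 2) = (\<Sum>k\<le>n div 2. (-1)^k * qbinom q n (int k) * E (n-2*k) y)"
proof -
  define N where "N = n div 2"
  define g where "g = (\<lambda>k m. (-1)^k * qbinom q n (int k) * cc (n-2*k) m * y^(N-k-m))"
  have dk: "(n - 2*k) div 2 = N - k" if "k \<le> N" for k using that unfolding N_def by auto
  have "(\<Sum>k\<le>N. (-1)^k * qbinom q n (int k) * E (n-2*k) y) = (\<Sum>k\<le>N. \<Sum>m\<le>N-k. g k m)"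
    unfolding E_def g_def by (rule sum.cong) (auto simp: dk sum_distrib_left mult.assoc diff_diff_add)
  also have "\<dots> = (\<Sum>(k,m)\<in>Sigma {..N} (\<lambda>k. {..N-k}). g k m)"
    by (rule sum.Sigma) auto
  also have "Sigma {..N} (\<lambda>k. {..N-k}) = {(k,m). k+m \<le> N}" by auto
  also have "(\<Sum>(k,m)\<in>{(k,m). k+m \<le> N}. g k m) = (\<Sum>s\<le>N. \<Sum>k\<le>s. g k (s-k))"
    by (rule sum.triangle_reindex_eq)
  also have "\<dots> = (\<Sum>s\<le>N. y^(N-s) * (\<Sum>k\<le>s. (-1)^k * qbinom q n (int k) * cc (n-2*k) (s-k)))"
    unfolding g_def sum_distrib_left
    by (intro sum.cong refl) (auto simp: algebra_simps)
  also have "\<dots> = (\<Sum>s\<le>N. y^(N-s) * (if s = 0 then 1 else 0))"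
    by (intro sum.cong refl) (subst inner, auto simp: N_def)
  also have "\<dots> = y^N" by (simp add: sum.delta' if_distrib cong: if_cong)
  finally show ?thesis unfolding N_def ..
qed

end


context gen begin

lemma qbinom_neg: "j < 0 \<Longrightarrow> qbinom q m j = 0" by (simp add: qbinom_def)

lemma inv_row:
  assumes a: "a \<le> 1" and iN: "i < N"
  shows "(\<Sum>j<N. qbinom q (2*i+a) (int i - int j) * ((-1)^j * E (2*j+a) y)) = (-1)^i * y^i"
proof -
  have d: "(2*i+a) div 2 = i" using a by auto
  have "y^i = (\<Sum>k\<le>i. (-1)^k * qbinom q (2*i+a) (int k) * E (2*i+a-2*k) y)"
    using inversion[of y "2*i+a"] unfolding d .
  also have "\<dots> = (\<Sum>k<Suc i. (-1)^(i-k) * qbinom q (2*i+a) (int (i-k)) * E (2*i+a-2*(i-k)) y)"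
    using sum.nat_diff_reindex[of "\<lambda>k. (-1)^k * qbinom q (2*i+a) (int k) * E (2*i+a-2*k) y" "Suc i"]
    by (simp add: lessThan_Suc_atMost)
  also have "\<dots> = (\<Sum>j<Suc i. (-1)^i * (qbinom q (2*i+a) (int i - int j) * ((-1)^j * E (2*j+a) y)))"
  proof (rule sum.cong)
    fix j assume "j \<in> {..<Suc i}"
    then have ji: "j \<le> i" by simp
    have e1: "2*i+a-2*(i-j) = 2*j+a" using ji by simp
    have e2: "int (i-j) = int i - int j" using ji by simp
    have e3: "(-1::'a)^(i-j) = (-1)^i * (-1)^j"
    proof -
      have "(-1::'a)^i = (-1)^(i-j) * (-1)^j" using ji by (simp add: power_add[symmetric])
      moreover have sq: "(-1::'a)^j * (-1)^j = 1" by (simp add: power_add[symmetric])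
      ultimately have "(-1::'a)^i * (-1)^j = (-1)^(i-j) * ((-1)^j * (-1)^j)" by (simp add: mult.assoc)
      then show ?thesis using sq by simp
    qed
    show "(-1)^(i-j) * qbinom q (2*i+a) (int (i-j)) * E (2*i+a-2*(i-j)) y =
      (-1)^i * (qbinom q (2*i+a) (int i - int j) * ((-1)^j * E (2*j+a) y))"
      unfolding e1 e2 e3 by (simp add: algebra_simps)
  qed simp
  also have "\<dots> = (-1)^i * (\<Sum>j<N. qbinom q (2*i+a) (int i - int j) * ((-1)^j * E (2*j+a) y))"
    unfolding sum_distrib_left[symmetric]
  proof (rule arg_cong[where f="\<lambda>x. (-1)^i * x"], rule sum.mono_neutral_left)
    show "\<forall>j\<in>{..<N} - {..<Suc i}. qbinom q (2*i+a) (int i - int j) * ((-1)^j * E (2*j+a) y) = 0"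
      by (auto simp: qbinom_neg)
  qed (use iN in auto)
  finally have "y^i = (-1)^i * (\<Sum>j<N. qbinom q (2*i+a) (int i - int j) * ((-1)^j * E (2*j+a) y))" .
  then have "(-1)^i * y^i = (-1)^i * (-1)^i * (\<Sum>j<N. qbinom q (2*i+a) (int i - int j) * ((-1)^j * E (2*j+a) y))"
    by (simp add: mult.assoc)
  also have "(-1::'a)^i * (-1)^i = 1" by (simp add: power_add[symmetric])
  finally show ?thesis by simp
qed

lemma E_small: "a \<le> 1 \<Longrightarrow> E a y = 1"
  unfolding E_def by (simp add: cc_0)

lemma main_det:
  assumes a: "a \<le> 1" and n: "n \<ge> 1"
  shows "det (mat n n (\<lambda>(i,j). qbinom q (2*i+a) (int i - int j) * y + qbinom q (2*i+a+2) (int i + 1 - int j)))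
     = E (2*n+a) y"
proof -
  define M where "M = mat n n (\<lambda>(i,j). qbinom q (2*i+a) (int i - int j) * y + qbinom q (2*i+a+2) (int i + 1 - int j))"
  define v where "v = (\<lambda>j. (-1)^j * E (2*j+a) y)"
  have M: "M \<in> carrier_mat n n" unfolding M_def by simp
  have shift: "qbinom q (2*i+a+2) (int i + 1 - int j) = qbinom q (2*(Suc i)+a) (int (Suc i) - int j)" for i j
    by (simp add: algebra_simps)
  have R1: "(\<Sum>j<n. M $$ (i,j) * v j) = y * ((-1)^i * y^i) + (\<Sum>j<n. qbinom q (2*(Suc i)+a) (int (Suc i) - int j) * v j)"
    if "i < n" for i
  proof -
    have "(\<Sum>j<n. M $$ (i,j) * v j) = (\<Sum>j<n. y * (qbinom q (2*i+a) (int i - int j) * v j) + qbinom q (2*(Suc i)+a) (int (Suc i) - int j) * v j)"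
      by (rule sum.cong) (use that in \<open>auto simp: M_def shift algebra_simps\<close>)
    also have "\<dots> = y * (\<Sum>j<n. qbinom q (2*i+a) (int i - int j) * v j) + (\<Sum>j<n. qbinom q (2*(Suc i)+a) (int (Suc i) - int j) * v j)"
      by (simp add: sum.distrib sum_distrib_left)
    also have "(\<Sum>j<n. qbinom q (2*i+a) (int i - int j) * v j) = (-1)^i * y^i"
      unfolding v_def by (rule inv_row[OF a that])
    finally show ?thesis .
  qed
  have rows: "(\<Sum>j<n. M $$ (i,j) * v j) = 0" if "Suc i < n" for i
  proof -
    have "(\<Sum>j<n. qbinom q (2*(Suc i)+a) (int (Suc i) - int j) * v j) = (-1)^(Suc i) * y^(Suc i)"
      unfolding v_def by (rule inv_row[OF a that])
    then show ?thesis using R1[of i] that by simp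
  qed
  obtain m where nm: "n = Suc m" using n by (cases n) auto
  have last: "(\<Sum>j<n. M $$ (n-1,j) * v j) = - ((-1)^n * E (2*n+a) y)"
  proof -
    have "(\<Sum>j<Suc n. qbinom q (2*n+a) (int n - int j) * v j) = (-1)^n * y^n"
      unfolding v_def by (rule inv_row[OF a]) simp
    then have "(\<Sum>j<n. qbinom q (2*n+a) (int n - int j) * v j) = (-1)^n * y^n - v n"
      by (simp add: qbinom_0 eq_diff_eq)
    then show ?thesis using R1[of m] unfolding nm v_def by simp
  qed
  have "det M = (-1)^(n-1) * (\<Sum>j<n. M $$ (n-1,j) * v j)"
  proof (rule hess_det[OF M n])
    show "M $$ (i,j) = 0" if "i < n" "j < n" "j > Suc i" for i j
      using that by (simp add: M_def qbinom_neg)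
    show "M $$ (i, Suc i) = 1" if "Suc i < n" for i
      using that by (simp add: M_def qbinom_neg qbinom_0)
    show "v 0 = 1" unfolding v_def using E_small[OF a] by simp
  qed (rule rows)
  also have "\<dots> = E (2*n+a) y" unfolding last by (simp add: nm)
  finally show ?thesis unfolding M_def .
qed

end


context gen begin

lemma Luc_E: assumes "N \<ge> 1" shows "Luc q N x = x^(N mod 2) * E N (x^2)"
proof -
  have "Luc q N x = (\<Sum>m\<le>N div 2. x^(N mod 2) * (cc N m * (x^2)^(N div 2 - m)))"
    unfolding Luc_def atLeast0AtMost
  proof (rule sum.cong)
    fix m assume "m \<in> {..N div 2}"
    then have m: "m \<le> N div 2" by simp
    have "N - 2*m = N mod 2 + 2*(N div 2 - m)" using m by presburger
    then have "x^(N - 2*m) = x^(N mod 2) * (x^2)^(N div 2 - m)"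
      by (simp add: power_add power_mult)
    moreover have "cc N m = q ^ (m choose 2) * qbinom q (N - m) (int m) * (qint q N / qint q (N - m))"
      using assms by (simp add: cc_def)
    ultimately show "q ^ (m choose 2) * qbinom q (N - m) (int m) * (qint q N / qint q (N - m)) * x ^ (N - 2 * m)
      = x^(N mod 2) * (cc N m * (x^2)^(N div 2 - m))" by (simp add: algebra_simps)
  qed simp
  also have "\<dots> = x^(N mod 2) * E N (x^2)" unfolding E_def sum_distrib_left ..
  finally show ?thesis .
qed
end

theorem proposition7:
  fixes q x :: "'a::field_char_0" and n :: nat
  assumes "n \<ge> 1"
    and q_generic: "\<And>k::nat. k \<ge> 1 \<Longrightarrow> q ^ k \<noteq> 1"
  shows "det (mat n n (\<lambda>(i,j). qbinom q (2*i) (int i - int j) * x^2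
              + qbinom q (2*i+2) (int i + 1 - int j))) = Luc q (2*n) x
       \<and> x * det (mat n n (\<lambda>(i,j). qbinom q (2*i+1) (int i - int j) * x^2
              + qbinom q (2*i+3) (int i + 1 - int j))) = Luc q (2*n+1) x"
proof -
  interpret gen q using q_generic by unfold_locales
  have d0: "det (mat n n (\<lambda>(i,j). qbinom q (2*i) (int i - int j) * x^2
              + qbinom q (2*i+2) (int i + 1 - int j))) = E (2*n) (x^2)"
    using main_det[of 0 n "x^2"] assms(1) by simp
  have d1: "det (mat n n (\<lambda>(i,j). qbinom q (2*i+1) (int i - int j) * x^2
              + qbinom q (2*i+3) (int i + 1 - int j))) = E (2*n+1) (x^2)"
    using main_det[of 1 n "x^2"] assms(1) by (simp add: numeral_3_eq_3)
  have l0: "Luc q (2*n) x = E (2*n) (x^2)" using Luc_E[of "2*n" x] assms(1) by simp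
  have l1: "Luc q (2*n+1) x = x * E (2*n+1) (x^2)" using Luc_E[of "2*n+1" x] by simp
  show ?thesis using d0 d1 l0 l1 by simp
qed

end
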